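(* Let $\mathfrak K$ be a diagram category. (1) The universal index and the universal signed index on $\mathfrak K$ are reduced. (2) If $\sigma^u$ is the universal signed index on $\mathfrak K$ with coefficients in $(S^u,\ast)$, then $\bar\sigma^u=p\circ\sigma^u$, where $p\colon S^u\to S^u/\ast$ is the quotient map, is the universal index on $\mathfrak K$. (3) If $\mathfrak K$ is a subcategory of $\mathfrak T_{m,n}(F,B)$ or $\mathfrak{VT}_{m,n}$ (so crossings have signs) and $\iota^u$ is the universal index on $\mathfrak K$ with coefficients in $I^u$, then $\tilde\iota^u(v)=(\iota^u(v),sgn(v))$ is the universal signed index on $\mathfrak K$, with coefficients in $I^u\times\{-1,+1\}$ and involution $(x,\epsilon)^\ast=(x,-\epsilon)$.
   Context: A diagram category $\mathfrak K$ is either the category of diagrams of a fixed oriented tangle with numbered components (virtual, flat, free, in a fixed surface $F$, flat in $F$, or classical), or a union of such categories over all tangles of a given type; $\mathfrak T_{m,n}(F,B)$ denotes tangles of type $(m,n)$ with boundary $B$ in $F$ and $\mathfrak{VT}_{m,n}$ virtual tangles of type $(m,n)$. Morphisms are formal compositions of isotopies, diagram isomorphisms, and Reidemeister moves. $\mathcal V(D)$ is the set of crossings, $sgn$ the crossing sign; for a morphism $f$, $f_*\colon dom(f_* )\to im(f_* )$ is the bijection between crossings surviving $f$ and their images. An index with coefficients in $I$ is a map $\iota\colon\bigsqcup_D\mathcal V(D)\to I$ with (I0) $\iota(f_*(v))=\iota(v)$ for elementary $f$, $v\in dom(f_* )$, and (I2) $\iota(v_1)=\iota(v_2)$ when a decreasing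 second Reidemeister move can be applied to $v_1,v_2$. A signed index with coefficients in $(S,\ast)$ satisfies (I0) and (I2+) $\sigma(v_1)=\sigma(v_2)^\ast$ for such pairs. An index $\iota^u$ is universal if every index $\iota$ factors uniquely as $\psi\circ\iota^u$; a signed index $\sigma^u$ is universal if every signed index $\sigma$ factors uniquely as $\psi\circ\sigma^u$ with $\psi(x^\ast)=\psi(x)^\ast$. A (signed) index $\sigma$ with coefficients in $S$ is reduced if $S=\{\sigma(v)\mid v\in\mathcal V(D),D\in\mathfrak K\}$. *)

theory Defs
  imports "HOL-Library.FuncSet"
begin

text \<open>The crossings of all diagrams of the
category are the elements of a type 'v (the disjoint union of the sets V(D)).
  E v w : there is an elementary morphism f with v in dom(f_*) and f_*(v) = w
          (isotopy, diagram isomorphism or Reidemeister move, in either direction).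
  R v1 v2 : a decreasing second Reidemeister move can be applied to v1, v2.\<close>

text \<open>Geometric properties of diagram categories used by the statement:
 R2 pairs are unordered, and every crossing v can be paired by an R2 move
 after an elementary move (push a small finger of one strand of v across the
 other strand right next to v: this increasing R2 move carries v to v' and
 v' forms an empty bigon with one of the new crossings).\<close>
definition diagram_category :: "('v \<Rightarrow> 'v \<Rightarrow> bool) \<Rightarrow> ('v \<Rightarrow> 'v \<Rightarrow> bool) \<Rightarrow> bool" where
  "diagram_category E R \<longleftrightarrow>
     (\<forall>v1 v2. R v1 v2 \<longrightarrow> R v2 v1) \<and>
     (\<forall>v. \<exists>v' w. E v v' \<and> R v' w)"

definition signed_crossings ::
  "('v \<Rightarrow> 'v \<Rightarrow> bool) \<Rightarrow> ('v \<Rightarrow> 'v \<Rightarrow> bool) \<Rightarrow> ('v \<Rightarrow> int) \<Rightarrow> bool" where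
  "signed_crossings E R sg \<longleftrightarrow>
     (\<forall>v. sg v \<in> {-1, 1}) \<and>
     (\<forall>v w. E v w \<longrightarrow> sg w = sg v) \<and>
     (\<forall>v1 v2. R v1 v2 \<longrightarrow> sg v2 = - sg v1)"

definition is_index ::
  "('v \<Rightarrow> 'v \<Rightarrow> bool) \<Rightarrow> ('v \<Rightarrow> 'v \<Rightarrow> bool) \<Rightarrow> ('v \<Rightarrow> 'i) \<Rightarrow> 'i set \<Rightarrow> bool" where
  "is_index E R \<iota> I \<longleftrightarrow>
     (\<forall>v. \<iota> v \<in> I) \<and>
     (\<forall>v w. E v w \<longrightarrow> \<iota> w = \<iota> v) \<and>
     (\<forall>v1 v2. R v1 v2 \<longrightarrow> \<iota> v1 = \<iota> v2)"

definition signed_coeffs :: "'s set \<Rightarrow> ('s \<Rightarrow> 's) \<Rightarrow> bool" where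
  "signed_coeffs S st \<longleftrightarrow> (\<forall>x\<in>S. st x \<in> S \<and> st (st x) = x)"

definition is_signed_index ::
  "('v \<Rightarrow> 'v \<Rightarrow> bool) \<Rightarrow> ('v \<Rightarrow> 'v \<Rightarrow> bool) \<Rightarrow> ('v \<Rightarrow> 's) \<Rightarrow> 's set \<Rightarrow> ('s \<Rightarrow> 's) \<Rightarrow> bool" where
  "is_signed_index E R \<sigma> S st \<longleftrightarrow>
     signed_coeffs S st \<and>
     (\<forall>v. \<sigma> v \<in> S) \<and>
     (\<forall>v w. E v w \<longrightarrow> \<sigma> w = \<sigma> v) \<and>
     (\<forall>v1 v2. R v1 v2 \<longrightarrow> \<sigma> v1 = st (\<sigma> v2))"

text \<open>Universality, with test coefficient sets ranging over all subsets of the type 'c.\<close>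
definition universal_index ::
  "'c itself \<Rightarrow> ('v \<Rightarrow> 'v \<Rightarrow> bool) \<Rightarrow> ('v \<Rightarrow> 'v \<Rightarrow> bool) \<Rightarrow> ('v \<Rightarrow> 'i) \<Rightarrow> 'i set \<Rightarrow> bool" where
  "universal_index (_::'c itself) E R \<iota>u Iu \<longleftrightarrow>
     is_index E R \<iota>u Iu \<and>
     (\<forall>(I::'c set) \<iota>. is_index E R \<iota> I \<longrightarrow>
        (\<exists>\<psi>. (\<psi> \<in> Iu \<rightarrow> I) \<and> (\<forall>v. \<iota> v = \<psi> (\<iota>u v))) \<and>
        (\<forall>\<psi>1 \<psi>2. (\<psi>1 \<in> Iu \<rightarrow> I) \<and> (\<forall>v. \<iota> v = \<psi>1 (\<iota>u v)) \<and>
                 (\<psi>2 \<in> Iu \<rightarrow> I) \<and> (\<forall>v. \<iota> v = \<psi>2 (\<iota>u v)) \<longrightarrow>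
                 (\<forall>x\<in>Iu. \<psi>1 x = \<psi>2 x)))"

definition universal_signed_index ::
  "'c itself \<Rightarrow> ('v \<Rightarrow> 'v \<Rightarrow> bool) \<Rightarrow> ('v \<Rightarrow> 'v \<Rightarrow> bool) \<Rightarrow> ('v \<Rightarrow> 's) \<Rightarrow> 's set \<Rightarrow> ('s \<Rightarrow> 's) \<Rightarrow> bool" where
  "universal_signed_index (_::'c itself) E R \<sigma>u Su stu \<longleftrightarrow>
     is_signed_index E R \<sigma>u Su stu \<and>
     (\<forall>(S::'c set) st \<sigma>. is_signed_index E R \<sigma> S st \<longrightarrow>
        (\<exists>\<psi>. (\<psi> \<in> Su \<rightarrow> S) \<and> (\<forall>x\<in>Su. \<psi> (stu x) = st (\<psi> x)) \<and> (\<forall>v. \<sigma> v = \<psi> (\<sigma>u v))) \<and>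
        (\<forall>\<psi>1 \<psi>2. (\<psi>1 \<in> Su \<rightarrow> S) \<and> (\<forall>x\<in>Su. \<psi>1 (stu x) = st (\<psi>1 x)) \<and> (\<forall>v. \<sigma> v = \<psi>1 (\<sigma>u v)) \<and>
                 (\<psi>2 \<in> Su \<rightarrow> S) \<and> (\<forall>x\<in>Su. \<psi>2 (stu x) = st (\<psi>2 x)) \<and> (\<forall>v. \<sigma> v = \<psi>2 (\<sigma>u v)) \<longrightarrow>
                 (\<forall>x\<in>Su. \<psi>1 x = \<psi>2 x)))"

definition reduced :: "('v \<Rightarrow> 'i) \<Rightarrow> 'i set \<Rightarrow> bool" where
  "reduced \<iota> I \<longleftrightarrow> I = range \<iota>"

definition star_quot :: "'s set \<Rightarrow> ('s \<Rightarrow> 's) \<Rightarrow> 's set set" where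
  "star_quot S st = (\<lambda>x. {x, st x}) ` S"

definition star_proj :: "('s \<Rightarrow> 's) \<Rightarrow> 's \<Rightarrow> 's set" where
  "star_proj st x = {x, st x}"

end

theory Submission
  imports Defs
begin

lemma part1:
  assumes "universal_index TYPE(bool) E R (\<iota>u :: 'v \<Rightarrow> 'i) Iu"
  shows "reduced \<iota>u Iu"
proof -
  have ix: "is_index E R \<iota>u Iu" and U: "\<And>(I::bool set) \<iota>. is_index E R \<iota> I \<Longrightarrow>
        (\<forall>\<psi>1 \<psi>2. (\<psi>1 \<in> Iu \<rightarrow> I) \<and> (\<forall>v. \<iota> v = \<psi>1 (\<iota>u v)) \<and>
                 (\<psi>2 \<in> Iu \<rightarrow> I) \<and> (\<forall>v. \<iota> v = \<psi>2 (\<iota>u v)) \<longrightarrow>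
                 (\<forall>x\<in>Iu. \<psi>1 x = \<psi>2 x))"
    using assms unfolding universal_index_def by blast+
  have c: "is_index E R (\<lambda>_. True) UNIV" unfolding is_index_def by simp
  have "\<forall>x\<in>Iu. (\<lambda>_. True) x = (\<lambda>y. y \<in> range \<iota>u) x"
    using U[OF c, rule_format, of "\<lambda>_. True" "\<lambda>y. y \<in> range \<iota>u"] by auto
  hence "Iu \<subseteq> range \<iota>u" by auto
  moreover have "range \<iota>u \<subseteq> Iu" using ix unfolding is_index_def by auto
  ultimately show ?thesis unfolding reduced_def by auto
qed

lemma part2:
  assumes dc: "diagram_category E R"
    and "universal_signed_index TYPE(bool) E R (\<sigma>u :: 'v \<Rightarrow> 's) Su stu"
  shows "reduced \<sigma>u Su"
proof -
  have ix: "is_signed_index E R \<sigma>u Su stu" and U: "\<And>(S::bool set) st \<sigma>. is_signed_index E R \<sigma> S st \<Longrightarrow>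
        (\<forall>\<psi>1 \<psi>2. (\<psi>1 \<in> Su \<rightarrow> S) \<and> (\<forall>x\<in>Su. \<psi>1 (stu x) = st (\<psi>1 x)) \<and> (\<forall>v. \<sigma> v = \<psi>1 (\<sigma>u v)) \<and>
                 (\<psi>2 \<in> Su \<rightarrow> S) \<and> (\<forall>x\<in>Su. \<psi>2 (stu x) = st (\<psi>2 x)) \<and> (\<forall>v. \<sigma> v = \<psi>2 (\<sigma>u v)) \<longrightarrow>
                 (\<forall>x\<in>Su. \<psi>1 x = \<psi>2 x))"
    using assms(2) unfolding universal_signed_index_def by blast+
  have inv: "\<And>x. x \<in> Su \<Longrightarrow> stu x \<in> Su \<and> stu (stu x) = x"
    using ix unfolding is_signed_index_def signed_coeffs_def by blast
  have inS: "\<And>v. \<sigma>u v \<in> Su" using ix unfolding is_signed_index_def by blast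
  have cl: "stu (\<sigma>u v) \<in> range \<sigma>u" for v
  proof -
    obtain v' w where "E v v'" "R v' w" using dc unfolding diagram_category_def by blast
    hence "R w v'" using dc unfolding diagram_category_def by blast
    hence "\<sigma>u w = stu (\<sigma>u v')" using ix unfolding is_signed_index_def by blast
    moreover have "\<sigma>u v' = \<sigma>u v" using \<open>E v v'\<close> ix unfolding is_signed_index_def by blast
    ultimately show ?thesis by (metis rangeI)
  qed
  have eq: "(stu y \<in> range \<sigma>u) = (y \<in> range \<sigma>u)" if "y \<in> Su" for y
    using cl inv[OF that] by (metis rangeE)
  have c: "is_signed_index E R (\<lambda>_. True) UNIV id"
    unfolding is_signed_index_def signed_coeffs_def by simp
  have "\<forall>x\<in>Su. (\<lambda>_. True) x = (\<lambda>y. y \<in> range \<sigma>u) x"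
    using U[OF c, rule_format, of "\<lambda>_. True" "\<lambda>y. y \<in> range \<sigma>u"] eq by auto
  hence "Su \<subseteq> range \<sigma>u" by auto
  moreover have "range \<sigma>u \<subseteq> Su" using inS by auto
  ultimately show ?thesis unfolding reduced_def by auto
qed

lemma part3:
  assumes "universal_signed_index TYPE('c) E R (\<sigma>u :: 'v \<Rightarrow> 's) Su stu"
  shows "universal_index TYPE('c) E R (star_proj stu \<circ> \<sigma>u) (star_quot Su stu)"
proof -
  have ix: "is_signed_index E R \<sigma>u Su stu" and U: "\<And>(S::'c set) st \<sigma>. is_signed_index E R \<sigma> S st \<Longrightarrow>
        (\<exists>\<psi>. (\<psi> \<in> Su \<rightarrow> S) \<and> (\<forall>x\<in>Su. \<psi> (stu x) = st (\<psi> x)) \<and> (\<forall>v. \<sigma> v = \<psi> (\<sigma>u v))) \<and>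
        (\<forall>\<psi>1 \<psi>2. (\<psi>1 \<in> Su \<rightarrow> S) \<and> (\<forall>x\<in>Su. \<psi>1 (stu x) = st (\<psi>1 x)) \<and> (\<forall>v. \<sigma> v = \<psi>1 (\<sigma>u v)) \<and>
                 (\<psi>2 \<in> Su \<rightarrow> S) \<and> (\<forall>x\<in>Su. \<psi>2 (stu x) = st (\<psi>2 x)) \<and> (\<forall>v. \<sigma> v = \<psi>2 (\<sigma>u v)) \<longrightarrow>
                 (\<forall>x\<in>Su. \<psi>1 x = \<psi>2 x))"
    using assms unfolding universal_signed_index_def by blast+
  have inv: "\<And>x. x \<in> Su \<Longrightarrow> stu x \<in> Su \<and> stu (stu x) = x"
    using ix unfolding is_signed_index_def signed_coeffs_def by blast
  have inS: "\<And>v. \<sigma>u v \<in> Su" using ix unfolding is_signed_index_def by blast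
  have Einv: "\<And>v w. E v w \<Longrightarrow> \<sigma>u w = \<sigma>u v" using ix unfolding is_signed_index_def by blast
  have Rr: "\<And>v1 v2. R v1 v2 \<Longrightarrow> \<sigma>u v1 = stu (\<sigma>u v2)" using ix unfolding is_signed_index_def by blast
  have pst: "star_proj stu (stu x) = star_proj stu x" if "x \<in> Su" for x
    using inv[OF that] unfolding star_proj_def by auto
  have idx: "is_index E R (star_proj stu \<circ> \<sigma>u) (star_quot Su stu)"
    unfolding is_index_def
  proof (intro conjI allI impI)
    fix v show "(star_proj stu \<circ> \<sigma>u) v \<in> star_quot Su stu"
      using inS unfolding star_quot_def star_proj_def by auto
  next
    fix v w assume "E v w" thus "(star_proj stu \<circ> \<sigma>u) w = (star_proj stu \<circ> \<sigma>u) v"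
      using Einv by simp
  next
    fix v1 v2 assume "R v1 v2" thus "(star_proj stu \<circ> \<sigma>u) v1 = (star_proj stu \<circ> \<sigma>u) v2"
      using Rr pst inS by simp
  qed
  show ?thesis unfolding universal_index_def
  proof (rule conjI[OF idx], rule allI, rule allI, rule impI, rule conjI)
    fix I :: "'c set" and \<iota>
    assume ii: "is_index E R \<iota> I"
    hence si: "is_signed_index E R \<iota> I id"
      unfolding is_index_def is_signed_index_def signed_coeffs_def by auto
    note UU = U[OF si]
    obtain \<psi> where p1: "\<psi> \<in> Su \<rightarrow> I" and p2: "\<forall>x\<in>Su. \<psi> (stu x) = \<psi> x"
      and p3: "\<forall>v. \<iota> v = \<psi> (\<sigma>u v)" using UU by auto
    define \<phi> where "\<phi> q = \<psi> (SOME x. x \<in> Su \<and> q = star_proj stu x)" for q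
    have phi: "\<phi> (star_proj stu x) = \<psi> x" if "x \<in> Su" for x
    proof -
      let ?y = "SOME y. y \<in> Su \<and> star_proj stu x = star_proj stu y"
      have "?y \<in> Su \<and> star_proj stu x = star_proj stu ?y"
        by (rule someI[of _ x]) (use that in auto)
      hence "?y \<in> Su" "{x, stu x} = {?y, stu ?y}" unfolding star_proj_def by auto
      hence "?y = x \<or> ?y = stu x" by auto
      hence "\<psi> ?y = \<psi> x"
      proof
        assume "?y = stu x" thus ?thesis using p2 that by simp
      qed simp
      thus ?thesis unfolding \<phi>_def by (simp add: eq_commute)
    qed
    show "\<exists>\<psi>. \<psi> \<in> star_quot Su stu \<rightarrow> I \<and> (\<forall>v. \<iota> v = \<psi> ((star_proj stu \<circ> \<sigma>u) v))"
    proof (intro exI conjI allI)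
      show "\<phi> \<in> star_quot Su stu \<rightarrow> I"
        using phi p1 unfolding star_quot_def star_proj_def[symmetric] by auto
      fix v show "\<iota> v = \<phi> ((star_proj stu \<circ> \<sigma>u) v)" using phi p3 inS by simp
    qed
    show "\<forall>\<psi>1 \<psi>2. \<psi>1 \<in> star_quot Su stu \<rightarrow> I \<and> (\<forall>v. \<iota> v = \<psi>1 ((star_proj stu \<circ> \<sigma>u) v)) \<and>
          \<psi>2 \<in> star_quot Su stu \<rightarrow> I \<and> (\<forall>v. \<iota> v = \<psi>2 ((star_proj stu \<circ> \<sigma>u) v)) \<longrightarrow>
          (\<forall>x\<in>star_quot Su stu. \<psi>1 x = \<psi>2 x)"
    proof (intro allI impI)
      fix \<psi>1 \<psi>2 assume h: "\<psi>1 \<in> star_quot Su stu \<rightarrow> I \<and> (\<forall>v. \<iota> v = \<psi>1 ((star_proj stu \<circ> \<sigma>u) v)) \<and>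
          \<psi>2 \<in> star_quot Su stu \<rightarrow> I \<and> (\<forall>v. \<iota> v = \<psi>2 ((star_proj stu \<circ> \<sigma>u) v))"
      have mem: "star_proj stu x \<in> star_quot Su stu" if "x \<in> Su" for x
        using that unfolding star_quot_def star_proj_def by auto
      have a1: "\<psi>1 \<circ> star_proj stu \<in> Su \<rightarrow> I" "\<psi>2 \<circ> star_proj stu \<in> Su \<rightarrow> I"
        using h mem by (auto simp: Pi_def)
      have a2: "\<forall>x\<in>Su. (\<psi>1 \<circ> star_proj stu) (stu x) = id ((\<psi>1 \<circ> star_proj stu) x)"
        "\<forall>x\<in>Su. (\<psi>2 \<circ> star_proj stu) (stu x) = id ((\<psi>2 \<circ> star_proj stu) x)"
        using pst by simp_all
      have a3: "\<forall>v. \<iota> v = (\<psi>1 \<circ> star_proj stu) (\<sigma>u v)" "\<forall>v. \<iota> v = (\<psi>2 \<circ> star_proj stu) (\<sigma>u v)"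
        using h unfolding comp_def by blast+
      have "\<forall>x\<in>Su. (\<psi>1 \<circ> star_proj stu) x = (\<psi>2 \<circ> star_proj stu) x"
        using UU[THEN conjunct2, rule_format, of "\<psi>1 \<circ> star_proj stu" "\<psi>2 \<circ> star_proj stu"]
          a1 a2 a3 by blast
      thus "\<forall>x\<in>star_quot Su stu. \<psi>1 x = \<psi>2 x"
        unfolding star_quot_def star_proj_def by auto
    qed
  qed
qed

lemma part4:
  assumes sc: "signed_crossings E R sg"
    and uu: "universal_index TYPE('c) E R (\<iota>u :: 'v \<Rightarrow> 'i) Iu"
  shows "universal_signed_index TYPE('c) E R (\<lambda>v. (\<iota>u v, sg v)) (Iu \<times> {-1, 1})
          (\<lambda>(x, e). (x, - e))"
proof -
  have ix: "is_index E R \<iota>u Iu" and U: "\<And>(I::'c set) \<iota>. is_index E R \<iota> I \<Longrightarrow>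
        (\<exists>\<psi>. (\<psi> \<in> Iu \<rightarrow> I) \<and> (\<forall>v. \<iota> v = \<psi> (\<iota>u v))) \<and>
        (\<forall>\<psi>1 \<psi>2. (\<psi>1 \<in> Iu \<rightarrow> I) \<and> (\<forall>v. \<iota> v = \<psi>1 (\<iota>u v)) \<and>
                 (\<psi>2 \<in> Iu \<rightarrow> I) \<and> (\<forall>v. \<iota> v = \<psi>2 (\<iota>u v)) \<longrightarrow>
                 (\<forall>x\<in>Iu. \<psi>1 x = \<psi>2 x))"
    using uu unfolding universal_index_def by blast+
  have sg1: "\<And>v. sg v = -1 \<or> sg v = 1" and sgE: "\<And>v w. E v w \<Longrightarrow> sg w = sg v"
    and sgR: "\<And>v1 v2. R v1 v2 \<Longrightarrow> sg v2 = - sg v1"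
    using sc unfolding signed_crossings_def by auto
  have iI: "\<And>v. \<iota>u v \<in> Iu" and iE: "\<And>v w. E v w \<Longrightarrow> \<iota>u w = \<iota>u v"
    and iR: "\<And>v1 v2. R v1 v2 \<Longrightarrow> \<iota>u v1 = \<iota>u v2"
    using ix unfolding is_index_def by auto
  let ?st = "\<lambda>(x::'i, e::int). (x, - e)"
  have sidx: "is_signed_index E R (\<lambda>v. (\<iota>u v, sg v)) (Iu \<times> {-1, 1}) ?st"
    unfolding is_signed_index_def signed_coeffs_def
    using iI iE iR sg1 sgE sgR by auto
  show ?thesis unfolding universal_signed_index_def
  proof (rule conjI[OF sidx], rule allI, rule allI, rule allI, rule impI, rule conjI)
    fix S :: "'c set" and st \<sigma>
    assume si: "is_signed_index E R \<sigma> S st"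
    have inv: "\<And>x. x \<in> S \<Longrightarrow> st x \<in> S \<and> st (st x) = x"
      using si unfolding is_signed_index_def signed_coeffs_def by blast
    have sS: "\<And>v. \<sigma> v \<in> S" and sE: "\<And>v w. E v w \<Longrightarrow> \<sigma> w = \<sigma> v"
      and sR: "\<And>v1 v2. R v1 v2 \<Longrightarrow> \<sigma> v1 = st (\<sigma> v2)"
      using si unfolding is_signed_index_def by auto
    define \<sigma>' where "\<sigma>' v = (if sg v = 1 then \<sigma> v else st (\<sigma> v))" for v
    have s'idx: "is_index E R \<sigma>' S"
      unfolding is_index_def
    proof (intro conjI allI impI)
      fix v show "\<sigma>' v \<in> S" using sS inv unfolding \<sigma>'_def by auto
    next
      fix v w assume "E v w" thus "\<sigma>' w = \<sigma>' v" using sE sgE unfolding \<sigma>'_def by auto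
    next
      fix v1 v2 assume r: "R v1 v2"
      show "\<sigma>' v1 = \<sigma>' v2"
      proof (cases "sg v1 = 1")
        case True
        thus ?thesis using sgR[OF r] sR[OF r] unfolding \<sigma>'_def by auto
      next
        case False
        hence "sg v1 = -1" using sg1 by blast
        thus ?thesis using sgR[OF r] sR[OF r] inv[OF sS[of v2]] unfolding \<sigma>'_def by auto
      qed
    qed
    note UU = U[OF s'idx]
    have bk: "\<sigma> v = (if sg v = 1 then \<sigma>' v else st (\<sigma>' v))" for v
      using inv[OF sS[of v]] unfolding \<sigma>'_def by auto
    obtain \<phi> where f1: "\<phi> \<in> Iu \<rightarrow> S" and f2: "\<forall>v. \<sigma>' v = \<phi> (\<iota>u v)" using UU by blast
    define \<psi> where "\<psi> p = (if snd p = 1 then \<phi> (fst p) else st (\<phi> (fst p)))" for p :: "'i \<times> int"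
    show "\<exists>\<psi>. \<psi> \<in> Iu \<times> {-1, 1} \<rightarrow> S \<and> (\<forall>x\<in>Iu \<times> {-1, 1}. \<psi> (?st x) = st (\<psi> x)) \<and>
            (\<forall>v. \<sigma> v = \<psi> (\<iota>u v, sg v))"
    proof (intro exI conjI ballI allI)
      show "\<psi> \<in> Iu \<times> {-1, 1} \<rightarrow> S" using f1 inv unfolding \<psi>_def by (auto simp: Pi_def)
    next
      fix x assume "x \<in> Iu \<times> {-1, (1::int)}"
      then obtain a e where x: "x = (a, e)" "a \<in> Iu" "e = -1 \<or> e = 1" by auto
      have fa: "\<phi> a \<in> S" using f1 x(2) by blast
      have ii: "st (st (\<phi> a)) = \<phi> a" using inv[OF fa] by blast
      from x(3) show "\<psi> (?st x) = st (\<psi> x)"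
      proof
        assume "e = -1" thus ?thesis using x(1) ii unfolding \<psi>_def by simp
      next
        assume "e = 1" thus ?thesis using x(1) unfolding \<psi>_def by simp
      qed
    next
      fix v
      have e1: "\<psi> (\<iota>u v, sg v) = (if sg v = 1 then \<phi> (\<iota>u v) else st (\<phi> (\<iota>u v)))"
        unfolding \<psi>_def by simp
      have e2: "\<sigma>' v = \<phi> (\<iota>u v)" using f2 by blast
      show "\<sigma> v = \<psi> (\<iota>u v, sg v)" unfolding e1 bk[of v] e2 ..
    qed
    show "\<forall>\<psi>1 \<psi>2. \<psi>1 \<in> Iu \<times> {-1, 1} \<rightarrow> S \<and> (\<forall>x\<in>Iu \<times> {-1, 1}. \<psi>1 (?st x) = st (\<psi>1 x)) \<and>
            (\<forall>v. \<sigma> v = \<psi>1 (\<iota>u v, sg v)) \<and>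
            \<psi>2 \<in> Iu \<times> {-1, 1} \<rightarrow> S \<and> (\<forall>x\<in>Iu \<times> {-1, 1}. \<psi>2 (?st x) = st (\<psi>2 x)) \<and>
            (\<forall>v. \<sigma> v = \<psi>2 (\<iota>u v, sg v)) \<longrightarrow>
            (\<forall>x\<in>Iu \<times> {-1, 1}. \<psi>1 x = \<psi>2 x)"
    proof (intro allI impI)
      fix \<psi>1 \<psi>2 :: "'i \<times> int \<Rightarrow> 'c"
      assume h: "\<psi>1 \<in> Iu \<times> {-1, 1} \<rightarrow> S \<and> (\<forall>x\<in>Iu \<times> {-1, 1}. \<psi>1 (?st x) = st (\<psi>1 x)) \<and>
            (\<forall>v. \<sigma> v = \<psi>1 (\<iota>u v, sg v)) \<and>
            \<psi>2 \<in> Iu \<times> {-1, 1} \<rightarrow> S \<and> (\<forall>x\<in>Iu \<times> {-1, 1}. \<psi>2 (?st x) = st (\<psi>2 x)) \<and>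
            (\<forall>v. \<sigma> v = \<psi>2 (\<iota>u v, sg v))"
      have gen: "(\<lambda>a. \<psi> (a, 1)) \<in> Iu \<rightarrow> S \<and> (\<forall>v. \<sigma>' v = \<psi> (\<iota>u v, 1))
          \<and> (\<forall>a\<in>Iu. \<psi> (a, -1) = st (\<psi> (a, 1)))"
        if p1: "\<psi> \<in> Iu \<times> {-1, 1} \<rightarrow> S" and p2: "\<forall>x\<in>Iu \<times> {-1, 1}. \<psi> (?st x) = st (\<psi> x)"
          and p3: "\<forall>v. \<sigma> v = \<psi> (\<iota>u v, sg v)" for \<psi>
      proof (intro conjI allI ballI)
        show "(\<lambda>a. \<psi> (a, 1)) \<in> Iu \<rightarrow> S" using p1 by auto
      next
        fix a assume "a \<in> Iu"
        hence "(a, 1) \<in> Iu \<times> {-1, (1::int)}" by simp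
        from p2[rule_format, OF this] show "\<psi> (a, -1) = st (\<psi> (a, 1))" by simp
      next
        fix v
        show "\<sigma>' v = \<psi> (\<iota>u v, 1)"
        proof (cases "sg v = 1")
          case True thus ?thesis using p3 unfolding \<sigma>'_def by simp
        next
          case False
          hence m: "sg v = -1" using sg1 by blast
          have "\<psi> (\<iota>u v, 1) \<in> S" using p1 iI by auto
          moreover have "\<psi> (\<iota>u v, -1) = st (\<psi> (\<iota>u v, 1))"
          proof -
            have "(\<iota>u v, 1) \<in> Iu \<times> {-1, (1::int)}" using iI by simp
            from p2[rule_format, OF this] show ?thesis by simp
          qed
          moreover have "\<sigma> v = \<psi> (\<iota>u v, -1)" using p3 m by metis
          ultimately have "\<sigma> v = st (\<psi> (\<iota>u v, 1))" by simp
          hence "st (\<sigma> v) = \<psi> (\<iota>u v, 1)" using inv[OF \<open>\<psi> (\<iota>u v, 1) \<in> S\<close>] by simp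
          thus ?thesis unfolding \<sigma>'_def using m by simp
        qed
      qed
      have g1: "(\<lambda>a. \<psi>1 (a, 1)) \<in> Iu \<rightarrow> S \<and> (\<forall>v. \<sigma>' v = \<psi>1 (\<iota>u v, 1))
          \<and> (\<forall>a\<in>Iu. \<psi>1 (a, -1) = st (\<psi>1 (a, 1)))"
        by (rule gen[of \<psi>1, OF h[THEN conjunct1] h[THEN conjunct2, THEN conjunct1] h[THEN conjunct2, THEN conjunct2, THEN conjunct1]])
      have g2: "(\<lambda>a. \<psi>2 (a, 1)) \<in> Iu \<rightarrow> S \<and> (\<forall>v. \<sigma>' v = \<psi>2 (\<iota>u v, 1))
          \<and> (\<forall>a\<in>Iu. \<psi>2 (a, -1) = st (\<psi>2 (a, 1)))"
        by (rule gen[of \<psi>2, OF h[THEN conjunct2, THEN conjunct2, THEN conjunct2, THEN conjunct1] h[THEN conjunct2, THEN conjunct2, THEN conjunct2, THEN conjunct2, THEN conjunct1] h[THEN conjunct2, THEN conjunct2, THEN conjunct2, THEN conjunct2, THEN conjunct2]])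
      have "\<forall>a\<in>Iu. (\<lambda>a. \<psi>1 (a, 1)) a = (\<lambda>a. \<psi>2 (a, 1)) a"
        using UU[THEN conjunct2, rule_format, of "\<lambda>a. \<psi>1 (a, 1)" "\<lambda>a. \<psi>2 (a, 1)"] g1 g2 by blast
      thus "\<forall>x\<in>Iu \<times> {-1, 1}. \<psi>1 x = \<psi>2 x"
      proof (intro ballI)
        fix x assume a: "\<forall>a\<in>Iu. (\<lambda>a. \<psi>1 (a, 1)) a = (\<lambda>a. \<psi>2 (a, 1)) a"
          and "x \<in> Iu \<times> {-1, (1::int)}"
        then obtain b e where x: "x = (b, e)" "b \<in> Iu" "e = -1 \<or> e = 1" by blast
        have q1: "\<psi>1 (b, 1) = \<psi>2 (b, 1)" using a x(2) by blast
        have q2: "\<psi>1 (b, -1) = \<psi>2 (b, -1)" using g1 g2 q1 x(2) by metis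
        show "\<psi>1 x = \<psi>2 x" using x(1,3) q1 q2 by blast
      qed
    qed
  qed
qed

theorem proposition4:
  fixes E R :: "'v \<Rightarrow> 'v \<Rightarrow> bool" and sg :: "'v \<Rightarrow> int"
  assumes "diagram_category E R"
  shows
   "(\<forall>(\<iota>u :: 'v \<Rightarrow> 'i) Iu. universal_index TYPE(bool) E R \<iota>u Iu \<longrightarrow> reduced \<iota>u Iu) \<and>
    (\<forall>(\<sigma>u :: 'v \<Rightarrow> 's) Su stu. universal_signed_index TYPE(bool) E R \<sigma>u Su stu \<longrightarrow> reduced \<sigma>u Su) \<and>
    (\<forall>(\<sigma>u :: 'v \<Rightarrow> 's) Su stu. universal_signed_index TYPE('c) E R \<sigma>u Su stu \<longrightarrow>
        universal_index TYPE('c) E R (star_proj stu \<circ> \<sigma>u) (star_quot Su stu)) \<and>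
    (signed_crossings E R sg \<longrightarrow>
      (\<forall>(\<iota>u :: 'v \<Rightarrow> 'i) Iu. universal_index TYPE('c) E R \<iota>u Iu \<longrightarrow>
        universal_signed_index TYPE('c) E R (\<lambda>v. (\<iota>u v, sg v)) (Iu \<times> {-1, 1})
          (\<lambda>(x, e). (x, - e))))"
  using part1 part2[OF assms] part3 part4 by blast

end
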